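(* Let $n\ge1$, $\mathbf{k}=(k_1,\dots,k_n)$ positive integers, $D\in\mathcal{D}_{\mathbf{k}}$ and $T=T(D)$. Then the Ranking Algorithm assigns every index of $T$ a rank; that is, for each $i=2,\dots,n$, when column $i$ is processed, the index $t_i-1$ (where $t_i$ is the top index of column $i$) has already been assigned a rank.
   Context: $|\mathbf{k}|=k_1+\cdots+k_n$, $N=n+|\mathbf{k}|$. $\mathcal{D}_{\mathbf{k}}$: sequences $(a_1,\dots,a_N)$ whose positive entries are $k_1,\dots,k_n$ in order, other entries $-1$, all partial sums $a_1+\cdots+a_{i-1}\ge0$. SW-word: $S^{k_j}$ for up step $k_j$, $W$ for $-1$. Filling Algorithm producing $T(D)$: $n$ columns, column $i$ with $k_i+1$ cells in rows $1,\dots,k_i+1$; place $1$ at top of column 1; having placed $1,\dots,i-1$, the lowest filled entry of column $j$ is active if not in row $k_j+1$; if the $i$-th letter is $W$ place $i$ below the smallest active entry, otherwise at the top of the leftmost empty column; continue until $1,\dots,N$ are placed. Entries of $T$ are called indices. Ranking Algorithm: assign ranks $0,1,\dots,k_1$ to the column-1 indices from top to bottom; for $i$ from $2$ to $n$, if the top index of column $i$ is $A+1$ and index $A$ has rank $a$, assign the indices of column $i$ ranks $a,a+1,\dots,a+k_i$ from top to bottom. *)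

theory Defs
  imports Main
begin

text \<open>Conventions: the composition k = (k_1,...,k_n) is a list of length n;
columns are 0-based in the list representation (column j+1 of the paper is
list position j); indices are 1..N as in the paper. A tableau is represented
as a list of n columns, each column being the list of its indices from top
to bottom.\<close>

definition Dk :: "nat list \<Rightarrow> int list set" where
  "Dk k = {D. length D = length k + sum_list k
            \<and> filter (\<lambda>x. x > 0) D = map int k
            \<and> (\<forall>x\<in>set D. x > 0 \<or> x = -1)
            \<and> (\<forall>m < length D. sum_list (take m D) \<ge> 0)}"

definition active_cols :: "nat list \<Rightarrow> nat list list \<Rightarrow> nat set" where
  "active_cols k cols = {j. j < length k \<and> cols ! j \<noteq> [] \<and> length (cols ! j) < k ! j + 1}"

text \<open>One step of the Filling Algorithm placing index i; the letter is S iff a > 0.\<close>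
definition fill_step :: "nat list \<Rightarrow> nat list list \<Rightarrow> nat \<times> int \<Rightarrow> nat list list" where
  "fill_step k cols ia = (case ia of (i, a) \<Rightarrow>
     (if a > 0 then
        (let j = (LEAST j. j < length k \<and> cols ! j = []) in cols[j := cols ! j @ [i]])
      else
        (let j = (SOME j. j \<in> active_cols k cols \<and>
                    (\<forall>j'\<in>active_cols k cols. last (cols ! j) \<le> last (cols ! j')))
         in cols[j := cols ! j @ [i]])))"

definition fillT :: "nat list \<Rightarrow> int list \<Rightarrow> nat list list" where
  "fillT k D = foldl (fill_step k) (replicate (length k) []) (zip [1..<length D + 1] D)"

end

theory Submission
  imports Defs
begin

definition colsOf :: "nat list \<Rightarrow> int list \<Rightarrow> nat list list" where
  "colsOf k xs = foldl (fill_step k) (replicate (length k) []) (zip [1..<length xs + 1] xs)"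

lemma colsOf_snoc: "colsOf k (xs @ [a]) = fill_step k (colsOf k xs) (length xs + 1, a)"
proof -
  have e: "[1..<length (xs @ [a]) + 1] = [1..<length xs + 1] @ [length xs + 1]" by simp
  have "zip [1..<length (xs @ [a]) + 1] (xs @ [a]) = zip [1..<length xs + 1] xs @ [(length xs + 1, a)]"
    unfolding e by (subst zip_append) (auto simp: Suc_le_eq)
  then show ?thesis unfolding colsOf_def by (simp del: upt_Suc)
qed

lemma pref:
  assumes "filter (\<lambda>x. x > 0) D = map int k"
  shows "filter (\<lambda>x. x > 0) (take m D) = map int (take (length (filter (\<lambda>x. (x::int) > 0) (take m D))) k)
     \<and> length (filter (\<lambda>x. x > 0) (take m D)) \<le> length k"
proof -
  let ?l1 = "filter (\<lambda>x. x > 0) (take m D)" and ?l2 = "filter (\<lambda>x. x > 0) (drop m D)"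
  have e: "?l1 @ ?l2 = map int k" unfolding filter_append[symmetric] append_take_drop_id using assms .
  have len: "length ?l1 \<le> length k" using arg_cong[OF e, of length] by simp
  have h: "take (length ?l1) (map int k) = ?l1" unfolding e[symmetric] by simp
  have h2: "map int (take (length ?l1) k) = ?l1" using h by (simp add: take_map)
  show ?thesis using h2[symmetric] len by (rule conjI)
qed

lemma sum_pos_neg:
  "\<forall>x\<in>set xs. x > 0 \<or> x = (-1::int) \<Longrightarrow>
   sum_list xs + int (length xs) = sum_list (filter (\<lambda>x. x > 0) xs) + int (length (filter (\<lambda>x. x > 0) xs))"
  by (induction xs) auto

lemma sum_take: "s \<le> length k \<Longrightarrow> sum_list (take s k) = (\<Sum>j<s. k ! j)"
  by (simp add: sum_list_sum_nth lessThan_atLeast0 min_absorb2)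

definition inv :: "nat list \<Rightarrow> int list \<Rightarrow> nat list list \<Rightarrow> bool" where
  "inv k xs cols = (let s = length (filter (\<lambda>x. x > 0) xs) in
     length cols = length k \<and> (\<forall>j<length k. cols ! j \<noteq> [] \<longleftrightarrow> j < s)
     \<and> (\<forall>j<s. length (cols ! j) \<le> k ! j + 1)
     \<and> (\<Sum>j<s. length (cols ! j)) = length xs
     \<and> (\<forall>x. 1 \<le> x \<and> x \<le> length xs \<longrightarrow> (\<exists>j<s. x \<in> set (cols ! j)))
     \<and> (\<forall>i. 1 \<le> i \<and> i < s \<longrightarrow> cols ! i \<noteq> [] \<and> (\<exists>j<i. hd (cols ! i) - 1 \<in> set (cols ! j))))"

lemma main_inv:
  assumes "\<forall>x\<in>set k. x > 0" and D: "D \<in> Dk k" and "m \<le> length D"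
  shows "inv k (take m D) (colsOf k (take m D))"
  using assms(3)
proof (induction m)
  case 0
  show ?case by (simp add: inv_def colsOf_def)
next
  case (Suc m)
  have mlt: "m < length D" using Suc.prems by simp
  have IH: "inv k (take m D) (colsOf k (take m D))" using Suc by simp
  define xs where "xs = take m D"
  define a where "a = D ! m"
  define cols where "cols = colsOf k xs"
  define s where "s = length (filter (\<lambda>x. x > 0) xs)"
  have tk: "take (Suc m) D = xs @ [a]" unfolding xs_def a_def using mlt by (simp add: take_Suc_conv_app_nth)
  have lxs: "length xs = m" using mlt xs_def by simp
  have DD: "length D = length k + sum_list k" "filter (\<lambda>x. x > 0) D = map int k"
     "\<forall>x\<in>set D. x > 0 \<or> x = -1" "\<forall>m < length D. sum_list (take m D) \<ge> 0"
    using D unfolding Dk_def by auto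
  have Iv: "inv k xs cols" using IH by (simp only: xs_def cols_def)
  have Iall: "(length cols = length k) \<and> (\<forall>j<length k. cols ! j \<noteq> [] \<longleftrightarrow> j < s) \<and> (\<forall>j<s. length (cols ! j) \<le> k ! j + 1) \<and> ((\<Sum>j<s. length (cols ! j)) = length xs) \<and> (\<forall>x. 1 \<le> x \<and> x \<le> length xs \<longrightarrow> (\<exists>j<s. x \<in> set (cols ! j))) \<and> (\<forall>i. 1 \<le> i \<and> i < s \<longrightarrow> cols ! i \<noteq> [] \<and> (\<exists>j<i. hd (cols ! i) - 1 \<in> set (cols ! j)))"
    using Iv unfolding inv_def Let_def s_def by assumption
  have I1: "length cols = length k" using Iall by (elim conjE) assumption
  have I2: "\<forall>j<length k. cols ! j \<noteq> [] \<longleftrightarrow> j < s" using Iall by (elim conjE) assumption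
  have I3: "\<forall>j<s. length (cols ! j) \<le> k ! j + 1" using Iall by (elim conjE) assumption
  have I4: "(\<Sum>j<s. length (cols ! j)) = length xs" using Iall by (elim conjE) assumption
  have I5: "\<forall>x. 1 \<le> x \<and> x \<le> length xs \<longrightarrow> (\<exists>j<s. x \<in> set (cols ! j))" using Iall by (elim conjE) assumption
  have I6: "\<forall>i. 1 \<le> i \<and> i < s \<longrightarrow> cols ! i \<noteq> [] \<and> (\<exists>j<i. hd (cols ! i) - 1 \<in> set (cols ! j))" using Iall by (elim conjE) assumption
  note I = I1 I2 I3 I4 I5 I6
  have pf: "filter (\<lambda>x. x > 0) xs = map int (take s k)" "s \<le> length k"
    using pref[OF DD(2), of m] unfolding xs_def s_def by auto
  have pf2: "length (filter (\<lambda>x. x > 0) (xs @ [a])) \<le> length k"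
    using pref[OF DD(2), of "Suc m"] tk by simp
  have step': "colsOf k (xs @ [a]) = fill_step k cols (m + 1, a)"
    using colsOf_snoc lxs cols_def by simp
  show ?case
  proof (cases "a > 0")
    case True
    have s': "length (filter (\<lambda>x. x > 0) (xs @ [a])) = Suc s" using True s_def by simp
    hence sn: "s < length k" using pf2 by simp
    have L: "(LEAST j. j < length k \<and> cols ! j = []) = s"
    proof (rule Least_equality)
      show "s < length k \<and> cols ! s = []" using I(2) sn by auto
    next
      fix y assume "y < length k \<and> cols ! y = []"
      then show "s \<le> y" using I(2) by (meson not_le)
    qed
    have ce: "cols ! s = []" using I(2) sn by auto
    define c' where "c' = cols[s := [m+1]]"
    have fs: "fill_step k cols (m + 1, a) = c'" unfolding fill_step_def c'_def using True L ce by simp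
    have c1: "\<And>j. j \<noteq> s \<Longrightarrow> c' ! j = cols ! j" unfolding c'_def by simp
    have c2: "c' ! s = [m+1]" unfolding c'_def using I(1) sn by simp
    have A1: "length c' = length k" using I(1) c'_def by simp
    have A2: "\<forall>j<length k. c' ! j \<noteq> [] \<longleftrightarrow> j < Suc s"
      using I(2) c1 c2 by (auto simp: less_Suc_eq)
    have A3: "\<forall>j<Suc s. length (c' ! j) \<le> k ! j + 1"
      using I(3) c1 c2 by (auto simp: less_Suc_eq)
    have "(\<Sum>j<s. length (c' ! j)) = (\<Sum>j<s. length (cols ! j))" by (rule sum.cong) (auto simp: c1)
    hence A4: "(\<Sum>j<Suc s. length (c' ! j)) = length (xs @ [a])" using I(4) c2 by simp
    have A5: "\<forall>x. 1 \<le> x \<and> x \<le> length (xs @ [a]) \<longrightarrow> (\<exists>j<Suc s. x \<in> set (c' ! j))"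
    proof (intro allI impI)
      fix x assume x: "1 \<le> x \<and> x \<le> length (xs @ [a])"
      show "\<exists>j<Suc s. x \<in> set (c' ! j)"
      proof (cases "x = m + 1")
        case True then show ?thesis using c2 by auto
      next
        case False
        then obtain j where "j < s" "x \<in> set (cols ! j)" using I(5) x lxs by auto
        then show ?thesis using c1[of j] by (intro exI[of _ j]) auto
      qed
    qed
    have A6: "\<forall>i. 1 \<le> i \<and> i < Suc s \<longrightarrow> c' ! i \<noteq> [] \<and> (\<exists>j<i. hd (c' ! i) - 1 \<in> set (c' ! j))"
    proof (intro allI impI)
      fix i assume i: "1 \<le> i \<and> i < Suc s"
      show "c' ! i \<noteq> [] \<and> (\<exists>j<i. hd (c' ! i) - 1 \<in> set (c' ! j))"
      proof (cases "i = s")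
        case True
        have "xs \<noteq> []" using pf i True by auto
        hence "1 \<le> m \<and> m \<le> length xs" using lxs by (auto simp: Suc_le_eq)
        then obtain j where "j < s" "m \<in> set (cols ! j)" using I(5) by auto
        then show ?thesis using True c2 c1[of j] by auto
      next
        case False
        then have "i < s" using i by simp
        then obtain j where "j < i" "hd (cols ! i) - 1 \<in> set (cols ! j)" "cols ! i \<noteq> []" using I(6) i by auto
        then show ?thesis using c1[of i] c1[of j] \<open>i < s\<close> by (intro conjI exI[of _ j]) auto
      qed
    qed
    show ?thesis unfolding tk step' fs inv_def Let_def s'
      by (intro conjI A1 A2 A3 A4 A5 A6)
  next
    case False
    have s': "length (filter (\<lambda>x. x > 0) (xs @ [a])) = s" using False s_def by simp
    have "a \<in> set D" using mlt a_def by simp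
    hence am: "a = -1" using DD(3) False by auto
    have sxs': "sum_list (xs @ [a]) \<ge> 0"
    proof (cases "Suc m < length D")
      case True then show ?thesis using DD(4)[rule_format, of "Suc m"] tk by simp
    next
      case False
      hence "take (Suc m) D = D" using mlt by simp
      moreover have "sum_list D = 0"
      proof -
        have "sum_list D + int (length D) = sum_list (map int k) + int (length (map int k))"
          using sum_pos_neg[OF DD(3)] unfolding DD(2) .
        then show ?thesis unfolding DD(1) sum_list_of_nat by simp
      qed
      ultimately show ?thesis using tk by simp
    qed
    have "\<forall>x\<in>set xs. x > 0 \<or> x = -1" using DD(3) unfolding xs_def by (auto dest: in_set_takeD)
    from sum_pos_neg[OF this] have e1: "sum_list xs + int (length xs) = sum_list (filter (\<lambda>x. x > 0) xs) + int s"
      unfolding s_def .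
    have e2: "sum_list (filter (\<lambda>x. x > 0) xs) = int (sum_list (take s k))"
      by (simp only: pf(1) sum_list_of_nat)
    have "sum_list xs \<ge> 1" using sxs' am by simp
    hence "length xs < sum_list (take s k) + s" using e1 e2 by linarith
    hence lt: "(\<Sum>j<s. length (cols ! j)) < (\<Sum>j<s. k ! j + 1)"
    proof -
      have "(\<Sum>j<s. k ! j + 1) = (\<Sum>j<s. k ! j) + s" unfolding sum.distrib by simp
      then show ?thesis using I(4) sum_take[OF pf(2)] \<open>length xs < sum_list (take s k) + s\<close> by linarith
    qed
    have "\<exists>j0<s. length (cols ! j0) < k ! j0 + 1"
    proof (rule ccontr)
      assume "\<not> ?thesis"
      hence "\<forall>j<s. k ! j + 1 \<le> length (cols ! j)" using leI by blast
      hence "(\<Sum>j<s. k ! j + 1) \<le> (\<Sum>j<s. length (cols ! j))" by (intro sum_mono) auto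
      thus False using lt by simp
    qed
    then obtain j0 where j0: "j0 < s" "length (cols ! j0) < k ! j0 + 1" by blast
    define A where "A = active_cols k cols"
    have j0A: "j0 \<in> A" unfolding A_def active_cols_def using j0 I(2) pf(2) by auto
    have fA: "finite A" unfolding A_def active_cols_def by (rule finite_subset[of _ "{..<length k}"]) auto
    define v where "v = Min ((\<lambda>j. last (cols ! j)) ` A)"
    have "v \<in> (\<lambda>j. last (cols ! j)) ` A" unfolding v_def using fA j0A by (intro Min_in) auto
    then obtain j1 where j1: "j1 \<in> A" "last (cols ! j1) = v" by auto
    have "\<forall>j'\<in>A. v \<le> last (cols ! j')" unfolding v_def using fA by auto
    hence ex: "\<exists>j. j \<in> A \<and> (\<forall>j'\<in>A. last (cols ! j) \<le> last (cols ! j'))" using j1 by auto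
    define jj where "jj = (SOME j. j \<in> A \<and> (\<forall>j'\<in>A. last (cols ! j) \<le> last (cols ! j')))"
    have "jj \<in> A" using someI_ex[OF ex] jj_def by blast
    hence jj: "jj < length k" "cols ! jj \<noteq> []" "length (cols ! jj) < k ! jj + 1"
      unfolding A_def active_cols_def by auto
    have jjs: "jj < s" using jj I(2) by auto
    define c' where "c' = cols[jj := cols ! jj @ [m+1]]"
    have fs: "fill_step k cols (m + 1, a) = c'" unfolding fill_step_def c'_def jj_def A_def
      using False by (simp add: Let_def)
    have c1: "\<And>j. j \<noteq> jj \<Longrightarrow> c' ! j = cols ! j" unfolding c'_def by simp
    have c2: "c' ! jj = cols ! jj @ [m+1]" unfolding c'_def using I(1) jj by simp
    have sub: "\<And>j. set (cols ! j) \<subseteq> set (c' ! j)" by (case_tac "j = jj") (auto simp: c1 c2)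
    have A1: "length c' = length k" using I(1) c'_def by simp
    have A2: "\<forall>j<length k. c' ! j \<noteq> [] \<longleftrightarrow> j < s"
    proof (intro allI impI)
      fix j assume "j < length k"
      then show "c' ! j \<noteq> [] \<longleftrightarrow> j < s" using I(2) c1 c2 jjs by (cases "j = jj") auto
    qed
    have A3: "\<forall>j<s. length (c' ! j) \<le> k ! j + 1"
    proof (intro allI impI)
      fix j assume "j < s"
      then show "length (c' ! j) \<le> k ! j + 1" using I(3) c1 c2 jj(3) by (cases "j = jj") auto
    qed
    have "(\<Sum>j<s. length (c' ! j)) = (\<Sum>j<s. length (cols ! j) + (if j = jj then 1 else 0))"
      by (rule sum.cong) (auto simp: c1 c2)
    also have "\<dots> = (\<Sum>j<s. length (cols ! j)) + 1" using jjs by (simp add: sum.distrib)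
    finally have A4: "(\<Sum>j<s. length (c' ! j)) = length (xs @ [a])" using I(4) by simp
    have A5: "\<forall>x. 1 \<le> x \<and> x \<le> length (xs @ [a]) \<longrightarrow> (\<exists>j<s. x \<in> set (c' ! j))"
    proof (intro allI impI)
      fix x assume x: "1 \<le> x \<and> x \<le> length (xs @ [a])"
      show "\<exists>j<s. x \<in> set (c' ! j)"
      proof (cases "x = m + 1")
        case True then show ?thesis using c2 jjs by auto
      next
        case False
        then obtain j where "j < s" "x \<in> set (cols ! j)" using I(5) x lxs by auto
        then show ?thesis using sub[of j] by auto
      qed
    qed
    have A6: "\<forall>i. 1 \<le> i \<and> i < s \<longrightarrow> c' ! i \<noteq> [] \<and> (\<exists>j<i. hd (c' ! i) - 1 \<in> set (c' ! j))"
    proof (intro allI impI)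
      fix i assume i: "1 \<le> i \<and> i < s"
      then obtain j where j: "j < i" "hd (cols ! i) - 1 \<in> set (cols ! j)" and ne: "cols ! i \<noteq> []"
        using I(6) by auto
      have "hd (c' ! i) = hd (cols ! i)" using ne c1 c2 by (cases "i = jj") auto
      moreover have "c' ! i \<noteq> []" using ne c1 c2 by (cases "i = jj") auto
      ultimately show "c' ! i \<noteq> [] \<and> (\<exists>j<i. hd (c' ! i) - 1 \<in> set (c' ! j))"
        using j sub[of j] by auto
    qed
    show ?thesis unfolding tk step' fs inv_def Let_def s'
      by (intro conjI A1 A2 A3 A4 A5 A6)
  qed
qed

theorem mainTheorem5:
  fixes k :: "nat list" and D :: "int list"
  assumes "length k \<ge> 1"
    and "\<forall>x\<in>set k. x > 0"
    and "D \<in> Dk k"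
  shows "\<forall>i. 1 \<le> i \<and> i < length k \<longrightarrow>
           fillT k D ! i \<noteq> [] \<and>
           (\<exists>j<i. hd (fillT k D ! i) - 1 \<in> set (fillT k D ! j))"
proof -
  have D': "filter (\<lambda>x. x > 0) D = map int k" using assms(3) unfolding Dk_def by blast
  hence len: "length (filter (\<lambda>x. x > 0) D) = length k" by simp
  have "colsOf k D = fillT k D" unfolding colsOf_def fillT_def by (rule refl)
  moreover have "inv k (take (length D) D) (colsOf k (take (length D) D))"
    using main_inv[OF assms(2,3), of "length D"] by simp
  ultimately have Iv: "inv k D (fillT k D)" by simp
  show ?thesis using Iv unfolding inv_def Let_def len by (elim conjE) assumption
qed

end
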